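(* Let $\mathbb{K}$ be an algebraically closed field and let $H$ be a pointed Hopf algebra over $\mathbb{K}$ of discrete corepresentation type. If $a\neq b$ are grouplike elements of $H$ such that there exist non-trivial skew-primitive elements $x\in P(1,a)$ and $y\in P(1,b)$, then $ab=ba$.
   Context: $P(g,h)=\{x\in H:\Delta(x)=g\otimes x+x\otimes h\}$; a skew-primitive is non-trivial if it does not lie in $\mathbb{K}(g-h)$. $H$ has discrete corepresentation type if for every dimension vector (finitely supported function $G(H)\to\mathbb{Z}_{\ge0}$ of composition multiplicities of the simple comodules $\mathbb{K}g$) there are only finitely many isomorphism classes of indecomposable finite-dimensional $H$-comodules with that dimension vector. *)

theory Defs
  imports "HOL-Computational_Algebra.Polynomial"
begin

text \<open>A Hopf algebra H over a field 'k is modelled on a type 'h :: ring_1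
 (the algebra structure) together with a scalar multiplication sc making it a 'k-vector
 space and a 'k-algebra. An element of H \<otimes> H is represented by a finite list of pairs
 [(a1,b1),...] standing for the sum of ai \<otimes> bi. Two such lists represent the same
 tensor iff every bilinear form H \<times> H \<rightarrow> 'k takes the same value on them (bilinear forms
 separate points of H \<otimes> H over a field). Similarly trilinear forms for H \<otimes> H \<otimes> H.\<close>

definition bilin :: "('k::field \<Rightarrow> 'h::ab_group_add \<Rightarrow> 'h) \<Rightarrow> ('h \<Rightarrow> 'h \<Rightarrow> 'k) \<Rightarrow> bool" where
  "bilin sc f \<longleftrightarrow>
     (\<forall>a a' b. f (a + a') b = f a b + f a' b) \<and>
     (\<forall>a b b'. f a (b + b') = f a b + f a b') \<and>
     (\<forall>c a b. f (sc c a) b = c * f a b \<and> f a (sc c b) = c * f a b)"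

definition trilin :: "('k::field \<Rightarrow> 'h::ab_group_add \<Rightarrow> 'h) \<Rightarrow> ('h \<Rightarrow> 'h \<Rightarrow> 'h \<Rightarrow> 'k) \<Rightarrow> bool" where
  "trilin sc f \<longleftrightarrow>
     (\<forall>a a' b d. f (a + a') b d = f a b d + f a' b d) \<and>
     (\<forall>a b b' d. f a (b + b') d = f a b d + f a b' d) \<and>
     (\<forall>a b d d'. f a b (d + d') = f a b d + f a b d') \<and>
     (\<forall>c a b d. f (sc c a) b d = c * f a b d \<and> f a (sc c b) d = c * f a b d
                \<and> f a b (sc c d) = c * f a b d)"

definition teq :: "('k::field \<Rightarrow> 'h::ab_group_add \<Rightarrow> 'h) \<Rightarrow> ('h \<times> 'h) list \<Rightarrow> ('h \<times> 'h) list \<Rightarrow> bool" where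
  "teq sc L M \<longleftrightarrow> (\<forall>f. bilin sc f \<longrightarrow>
      (\<Sum>(a,b)\<leftarrow>L. f a b) = (\<Sum>(a,b)\<leftarrow>M. f a b))"

definition hopf_algebra ::
  "('k::field \<Rightarrow> 'h::ring_1 \<Rightarrow> 'h) \<Rightarrow> ('h \<Rightarrow> ('h \<times> 'h) list) \<Rightarrow> ('h \<Rightarrow> 'k) \<Rightarrow> ('h \<Rightarrow> 'h) \<Rightarrow> bool" where
  "hopf_algebra sc D e S \<longleftrightarrow>
     vector_space sc \<and>
     (\<forall>c x y. sc c (x * y) = sc c x * y \<and> sc c (x * y) = x * sc c y) \<and>
     \<comment> \<open>D and e are linear\<close>
     (\<forall>x y. teq sc (D (x + y)) (D x @ D y)) \<and>
     (\<forall>c x. teq sc (D (sc c x)) (map (\<lambda>(a,b). (sc c a, b)) (D x))) \<and>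
     (\<forall>x y. e (x + y) = e x + e y) \<and> (\<forall>c x. e (sc c x) = c * e x) \<and>
     \<comment> \<open>coassociativity: (D \<otimes> id) D = (id \<otimes> D) D\<close>
     (\<forall>x f. trilin sc f \<longrightarrow>
        (\<Sum>(a,b)\<leftarrow>D x. \<Sum>(c,d)\<leftarrow>D a. f c d b) = (\<Sum>(a,b)\<leftarrow>D x. \<Sum>(c,d)\<leftarrow>D b. f a c d)) \<and>
     \<comment> \<open>counit axioms\<close>
     (\<forall>x. (\<Sum>(a,b)\<leftarrow>D x. sc (e a) b) = x \<and> (\<Sum>(a,b)\<leftarrow>D x. sc (e b) a) = x) \<and>
     \<comment> \<open>D and e are algebra maps\<close>
     teq sc (D 1) [(1, 1)] \<and>
     (\<forall>x y. teq sc (D (x * y)) [(a * c, b * d). (a,b) \<leftarrow> D x, (c,d) \<leftarrow> D y]) \<and>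
     e 1 = 1 \<and> (\<forall>x y. e (x * y) = e x * e y) \<and>
     \<comment> \<open>antipode: linear, and S * id = id * S = unit \<circ> counit\<close>
     (\<forall>x y. S (x + y) = S x + S y) \<and> (\<forall>c x. S (sc c x) = sc c (S x)) \<and>
     (\<forall>x. (\<Sum>(a,b)\<leftarrow>D x. S a * b) = sc (e x) 1 \<and> (\<Sum>(a,b)\<leftarrow>D x. a * S b) = sc (e x) 1)"

definition grouplike :: "('k::field \<Rightarrow> 'h::ring_1 \<Rightarrow> 'h) \<Rightarrow> ('h \<Rightarrow> ('h \<times> 'h) list) \<Rightarrow> 'h \<Rightarrow> bool" where
  "grouplike sc D g \<longleftrightarrow> g \<noteq> 0 \<and> teq sc (D g) [(g, g)]"

definition skew_prim :: "('k::field \<Rightarrow> 'h::ring_1 \<Rightarrow> 'h) \<Rightarrow> ('h \<Rightarrow> ('h \<times> 'h) list) \<Rightarrow> 'h \<Rightarrow> 'h \<Rightarrow> 'h set" where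
  "skew_prim sc D g h = {x. teq sc (D x) [(g, x), (x, h)]}"

definition nontrivial_skew_prim ::
  "('k::field \<Rightarrow> 'h::ring_1 \<Rightarrow> 'h) \<Rightarrow> ('h \<Rightarrow> ('h \<times> 'h) list) \<Rightarrow> 'h \<Rightarrow> 'h \<Rightarrow> 'h \<Rightarrow> bool" where
  "nontrivial_skew_prim sc D g h x \<longleftrightarrow> x \<in> skew_prim sc D g h \<and> x \<notin> {sc c (g - h) | c. True}"

text \<open>Finite-dimensional comodules: an n-dimensional right comodule V = 'k^n with basis
 e_0..e_{n-1} is given by its coefficient matrix C (entries C i j in H, i,j < n),
 coaction rho(e_j) = sum_i e_i \<otimes> C i j.\<close>
definition is_comod ::
  "('k::field \<Rightarrow> 'h::ring_1 \<Rightarrow> 'h) \<Rightarrow> ('h \<Rightarrow> ('h \<times> 'h) list) \<Rightarrow> ('h \<Rightarrow> 'k) \<Rightarrow> nat \<Rightarrow> (nat \<Rightarrow> nat \<Rightarrow> 'h) \<Rightarrow> bool" where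
  "is_comod sc D e n C \<longleftrightarrow> (\<forall>i<n. \<forall>j<n.
      teq sc (D (C i j)) (map (\<lambda>k. (C i k, C k j)) [0..<n]) \<and> e (C i j) = (if i = j then 1 else 0))"

definition mat_inv :: "nat \<Rightarrow> (nat \<Rightarrow> nat \<Rightarrow> 'k::field) \<Rightarrow> (nat \<Rightarrow> nat \<Rightarrow> 'k) \<Rightarrow> bool" where
  "mat_inv n P Q \<longleftrightarrow> (\<forall>i<n. \<forall>j<n.
      (\<Sum>k<n. P i k * Q k j) = (if i = j then 1 else 0) \<and> (\<Sum>k<n. Q i k * P k j) = (if i = j then 1 else 0))"

text \<open>Coefficient matrix of the same comodule with respect to the basis given by the
 columns of Q = P^{-1}:  P C Q.\<close>
definition conj :: "('k::field \<Rightarrow> 'h::ring_1 \<Rightarrow> 'h) \<Rightarrow> nat \<Rightarrow> (nat \<Rightarrow> nat \<Rightarrow> 'k) \<Rightarrow> (nat \<Rightarrow> nat \<Rightarrow> 'k)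
     \<Rightarrow> (nat \<Rightarrow> nat \<Rightarrow> 'h) \<Rightarrow> nat \<Rightarrow> nat \<Rightarrow> 'h" where
  "conj sc n P Q C i j = (\<Sum>k<n. \<Sum>l<n. sc (P i k * Q l j) (C k l))"

definition comod_iso :: "('k::field \<Rightarrow> 'h::ring_1 \<Rightarrow> 'h) \<Rightarrow> nat \<Rightarrow> (nat \<Rightarrow> nat \<Rightarrow> 'h) \<Rightarrow> (nat \<Rightarrow> nat \<Rightarrow> 'h) \<Rightarrow> bool" where
  "comod_iso sc n C C' \<longleftrightarrow> (\<exists>P Q. mat_inv n P Q \<and> (\<forall>i<n. \<forall>j<n. C' i j = conj sc n P Q C i j))"

text \<open>V is a direct sum of two nonzero subcomodules: there is a basis whose first m
 vectors span one summand and the remaining n-m the other, both subcomodules,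
 i.e. the coefficient matrix is block diagonal.\<close>
definition decomposable :: "('k::field \<Rightarrow> 'h::ring_1 \<Rightarrow> 'h) \<Rightarrow> nat \<Rightarrow> (nat \<Rightarrow> nat \<Rightarrow> 'h) \<Rightarrow> bool" where
  "decomposable sc n C \<longleftrightarrow> (\<exists>P Q m. mat_inv n P Q \<and> 0 < m \<and> m < n \<and>
      (\<forall>i<n. \<forall>j<n. (i < m \<longleftrightarrow> m \<le> j) \<longrightarrow> conj sc n P Q C i j = 0))"

definition indecomposable :: "('k::field \<Rightarrow> 'h::ring_1 \<Rightarrow> 'h) \<Rightarrow> nat \<Rightarrow> (nat \<Rightarrow> nat \<Rightarrow> 'h) \<Rightarrow> bool" where
  "indecomposable sc n C \<longleftrightarrow> 0 < n \<and> \<not> decomposable sc n C"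

text \<open>Simple: nonzero and no proper nonzero subcomodule (span of the first m vectors of
 some basis being a subcomodule means the lower-left block vanishes).\<close>
definition simple_comod :: "('k::field \<Rightarrow> 'h::ring_1 \<Rightarrow> 'h) \<Rightarrow> nat \<Rightarrow> (nat \<Rightarrow> nat \<Rightarrow> 'h) \<Rightarrow> bool" where
  "simple_comod sc n C \<longleftrightarrow> 0 < n \<and> \<not> (\<exists>P Q m. mat_inv n P Q \<and> 0 < m \<and> m < n \<and>
      (\<forall>i<n. \<forall>j<n. m \<le> i \<and> j < m \<longrightarrow> conj sc n P Q C i j = 0))"

definition pointed ::
  "('k::field \<Rightarrow> 'h::ring_1 \<Rightarrow> 'h) \<Rightarrow> ('h \<Rightarrow> ('h \<times> 'h) list) \<Rightarrow> ('h \<Rightarrow> 'k) \<Rightarrow> bool" where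
  "pointed sc D e \<longleftrightarrow> (\<forall>n C. is_comod sc D e n C \<and> simple_comod sc n C \<longrightarrow> n = 1)"

text \<open>Dimension vector: d g = multiplicity of the simple comodule K g as composition factor.
 A composition series with one-dimensional factors is a basis in which the coefficient
 matrix is upper triangular; the k-th factor is then K (C' k k).  (Well-definedness is
 Jordan-Hoelder.)\<close>
definition has_dimvec :: "('k::field \<Rightarrow> 'h::ring_1 \<Rightarrow> 'h) \<Rightarrow> nat \<Rightarrow> (nat \<Rightarrow> nat \<Rightarrow> 'h) \<Rightarrow> ('h \<Rightarrow> nat) \<Rightarrow> bool" where
  "has_dimvec sc n C d \<longleftrightarrow> (\<exists>P Q. mat_inv n P Q \<and>
      (\<forall>i<n. \<forall>j<n. j < i \<longrightarrow> conj sc n P Q C i j = 0) \<and>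
      (\<forall>g. d g = card {k. k < n \<and> conj sc n P Q C k k = g}))"

definition discrete_corep_type ::
  "('k::field \<Rightarrow> 'h::ring_1 \<Rightarrow> 'h) \<Rightarrow> ('h \<Rightarrow> ('h \<times> 'h) list) \<Rightarrow> ('h \<Rightarrow> 'k) \<Rightarrow> bool" where
  "discrete_corep_type sc D e \<longleftrightarrow>
     (\<forall>d :: 'h \<Rightarrow> nat. finite {g. d g \<noteq> 0} \<and> (\<forall>g. d g \<noteq> 0 \<longrightarrow> grouplike sc D g) \<longrightarrow>
        finite ((\<lambda>(n, C). {(m, C'). m = n \<and> is_comod sc D e m C' \<and> comod_iso sc m C C'}) `
                {(n, C). is_comod sc D e n C \<and> indecomposable sc n C \<and> has_dimvec sc n C d}))"

end

theory Submission
  imports Defs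
begin


lemma vs_field: "vector_space ((*) :: 'k::field \<Rightarrow> 'k \<Rightarrow> 'k)"
  by unfold_locales (auto simp: algebra_simps)

lemma sep:
  fixes sc :: "'k::field \<Rightarrow> 'h::ab_group_add \<Rightarrow> 'h"
  assumes V: "vector_space sc" and v: "v \<noteq> 0"
  shows "\<exists>\<phi>. Vector_Spaces.linear sc (*) \<phi> \<and> \<phi> v \<noteq> 0"
proof -
  interpret V: vector_space sc by fact
  interpret P: vector_space_pair sc "(*) :: 'k \<Rightarrow> 'k \<Rightarrow> 'k"
    by (intro vector_space_pair.intro V vs_field)
  have "V.independent {v}" using v V.independent_insert[of v "{}"] by simp
  from P.linear_independent_extend[OF this, of "\<lambda>_. 1"]
  obtain g where "Vector_Spaces.linear sc (*) g" "g v = 1" by auto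
  thus ?thesis by (intro exI[of _ g]) auto
qed

definition bilinH :: "('k::field \<Rightarrow> 'h::ab_group_add \<Rightarrow> 'h) \<Rightarrow> ('h \<Rightarrow> 'h \<Rightarrow> 'h) \<Rightarrow> bool" where
  "bilinH sc F \<longleftrightarrow>
     (\<forall>a a' b. F (a + a') b = F a b + F a' b) \<and>
     (\<forall>a b b'. F a (b + b') = F a b + F a b') \<and>
     (\<forall>c a b. F (sc c a) b = sc c (F a b) \<and> F a (sc c b) = sc c (F a b))"

lemma lin_sum_list:
  assumes "Vector_Spaces.linear sc (*) \<phi>"
  shows "\<phi> (\<Sum>(u,v)\<leftarrow>L. F u v) = (\<Sum>(u,v)\<leftarrow>L. \<phi> (F u v))"
proof -
  interpret Vector_Spaces.linear sc "(*)" \<phi> by fact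
  show ?thesis by (induction L) (auto simp: add)
qed

lemma transfer:
  fixes sc :: "'k::field \<Rightarrow> 'h::ab_group_add \<Rightarrow> 'h"
  assumes V: "vector_space sc" and T: "teq sc L M" and F: "bilinH sc F"
  shows "(\<Sum>(u,v)\<leftarrow>L. F u v) = (\<Sum>(u,v)\<leftarrow>M. F u v)"
proof (rule ccontr)
  assume "\<not> ?thesis"
  then have "(\<Sum>(u,v)\<leftarrow>L. F u v) - (\<Sum>(u,v)\<leftarrow>M. F u v) \<noteq> 0" by simp
  from sep[OF V this] obtain \<phi> where L: "Vector_Spaces.linear sc (*) \<phi>"
    and ne: "\<phi> ((\<Sum>(u,v)\<leftarrow>L. F u v) - (\<Sum>(u,v)\<leftarrow>M. F u v)) \<noteq> 0" by auto
  interpret Vector_Spaces.linear sc "(*)" \<phi> by fact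
  have "bilin sc (\<lambda>u v. \<phi> (F u v))"
    using F unfolding bilin_def bilinH_def by (auto simp: add scale)
  with T have "(\<Sum>(u,v)\<leftarrow>L. \<phi> (F u v)) = (\<Sum>(u,v)\<leftarrow>M. \<phi> (F u v))"
    unfolding teq_def by blast
  with ne show False by (simp add: diff lin_sum_list[OF L])
qed

lemma teq_refl: "teq sc L L" by (simp add: teq_def)
lemma teq_sym: "teq sc L M \<Longrightarrow> teq sc M L" by (simp add: teq_def)
lemma teq_trans: "teq sc L M \<Longrightarrow> teq sc M N \<Longrightarrow> teq sc L N" by (simp add: teq_def)

lemma bilin_zero:
  assumes "bilin sc f" "vector_space sc"
  shows "f 0 v = 0" "f u 0 = 0"
proof -
  interpret vector_space sc by fact
  have "f (sc 0 0) v = 0 * f 0 v" "f u (sc 0 0) = 0 * f u 0"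
    using assms(1) unfolding bilin_def by blast+
  thus "f 0 v = 0" "f u 0 = 0" by simp_all
qed

lemma sum_comp:
  "(\<Sum>(a,b)\<leftarrow>[(a * c, b * d). (a,b) \<leftarrow> L, (c,d) \<leftarrow> M]. f a b) =
   (\<Sum>(a,b)\<leftarrow>L. \<Sum>(c,d)\<leftarrow>M. f (a*c) (b*d))"
proof (induction L)
  case Nil then show ?case by simp
next
  case (Cons p L)
  obtain a b where p: "p = (a,b)" by force
  have "(\<Sum>(x,y)\<leftarrow>[(a * c, b * d). (c,d) \<leftarrow> M]. f x y) = (\<Sum>(c,d)\<leftarrow>M. f (a*c) (b*d))"
    by (induction M) auto
  with Cons show ?case by (simp add: p)
qed

locale hopf =
  fixes sc :: "'k::field \<Rightarrow> 'h::ring_1 \<Rightarrow> 'h" and D :: "'h \<Rightarrow> ('h \<times> 'h) list"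
    and e :: "'h \<Rightarrow> 'k" and S :: "'h \<Rightarrow> 'h"
  assumes H: "hopf_algebra sc D e S"
begin

lemma VS: "vector_space sc" using H unfolding hopf_algebra_def by blast

sublocale V: vector_space sc by (rule VS)

lemma sc_mult_both: "\<forall>c x y. sc c (x * y) = sc c x * y \<and> sc c (x * y) = x * sc c y"
  using H unfolding hopf_algebra_def by (elim conjE)
lemma sc_mult1: "sc c (x*y) = sc c x * y" using sc_mult_both by metis
lemma sc_mult2: "sc c (x*y) = x * sc c y" using sc_mult_both by metis
lemma D_add: "teq sc (D (x + y)) (D x @ D y)" using H unfolding hopf_algebra_def by blast
lemma D_scale: "teq sc (D (sc c x)) (map (\<lambda>(a,b). (sc c a, b)) (D x))"
  using H unfolding hopf_algebra_def by blast
lemma e_add: "e (x + y) = e x + e y" using H unfolding hopf_algebra_def by blast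
lemma e_scale: "e (sc c x) = c * e x" using H unfolding hopf_algebra_def by blast
lemma counit: "(\<Sum>(a,b)\<leftarrow>D x. sc (e a) b) = x" using H unfolding hopf_algebra_def by blast
lemma D_mult: "teq sc (D (x * y)) [(a * c, b * d). (a,b) \<leftarrow> D x, (c,d) \<leftarrow> D y]"
  using H unfolding hopf_algebra_def by blast
lemma e_one: "e 1 = 1" using H unfolding hopf_algebra_def by blast
lemma e_mult: "e (x * y) = e x * e y" using H unfolding hopf_algebra_def by blast
lemma S_add: "S (x + y) = S x + S y" using H unfolding hopf_algebra_def by blast
lemma S_scale: "S (sc c x) = sc c (S x)" using H unfolding hopf_algebra_def by blast
lemma ant1: "(\<Sum>(a,b)\<leftarrow>D x. S a * b) = sc (e x) 1" using H unfolding hopf_algebra_def by blast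
lemma ant2: "(\<Sum>(a,b)\<leftarrow>D x. a * S b) = sc (e x) 1" using H unfolding hopf_algebra_def by blast

lemma e_zero: "e 0 = 0" using e_scale[of 0 0] by simp

lemma bilinH_counit: "bilinH sc (\<lambda>u v. sc (e u) v)"
  unfolding bilinH_def by (auto simp: e_add e_scale V.scale_left_distrib V.scale_right_distrib mult.commute)

lemma bilinH_S1: "bilinH sc (\<lambda>u v. S u * v)"
  unfolding bilinH_def by (auto simp: S_add S_scale distrib_left distrib_right sc_mult1[symmetric] sc_mult2[symmetric])

lemma bilinH_S2: "bilinH sc (\<lambda>u v. u * S v)"
  unfolding bilinH_def by (auto simp: S_add S_scale distrib_left distrib_right sc_mult1[symmetric] sc_mult2[symmetric])

lemma gl_e: assumes "grouplike sc D g" shows "e g = 1"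
proof -
  have T: "teq sc (D g) [(g,g)]" and g0: "g \<noteq> 0" using assms unfolding grouplike_def by auto
  have "g = sc (e g) g" using transfer[OF VS T bilinH_counit] counit[of g] by simp
  then have "sc (e g - 1) g = 0" by (simp add: V.scale_left_diff_distrib)
  with g0 show ?thesis by simp
qed

lemma gl_inv: assumes "grouplike sc D g" shows "S g * g = 1" "g * S g = 1"
proof -
  have T: "teq sc (D g) [(g,g)]" using assms unfolding grouplike_def by auto
  show "S g * g = 1" using transfer[OF VS T bilinH_S1] ant1[of g] gl_e[OF assms] by simp
  show "g * S g = 1" using transfer[OF VS T bilinH_S2] ant2[of g] gl_e[OF assms] by simp
qed

lemma skew_e: assumes "z \<in> skew_prim sc D 1 h" "grouplike sc D h" shows "e z = 0"
proof -
  have T: "teq sc (D z) [(1,z),(z,h)]" using assms unfolding skew_prim_def by auto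
  have "z = z + sc (e z) h" using transfer[OF VS T bilinH_counit] counit[of z] e_one by simp
  then have "sc (e z) h = 0" by simp
  moreover have "h \<noteq> 0" using assms(2) unfolding grouplike_def by auto
  ultimately show ?thesis by simp
qed

lemma D_zero: "teq sc (D 0) []"
  unfolding teq_def
proof (intro allI impI)
  fix f assume f: "bilin sc f"
  have "teq sc (D (sc 0 0)) (map (\<lambda>(a,b). (sc 0 a, b)) (D 0))" by (rule D_scale)
  then have "(\<Sum>(a,b)\<leftarrow>D 0. f a b) = (\<Sum>(a,b)\<leftarrow>map (\<lambda>(a,b). (sc 0 a, b)) (D 0). f a b)"
    using f unfolding teq_def by simp
  also have "\<dots> = 0"
    using bilin_zero(1)[OF f VS] by (simp add: case_prod_unfold o_def)
  finally show "(\<Sum>(a,b)\<leftarrow>D 0. f a b) = (\<Sum>(a,b)\<leftarrow>[]. f a b)" by simp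
qed

lemma D_scale_teq: assumes "teq sc (D w) L"
  shows "teq sc (D (sc c w)) (map (\<lambda>(a,b). (sc c a, b)) L)"
  unfolding teq_def
proof (intro allI impI)
  fix f assume f: "bilin sc f"
  have fc: "bilin sc (\<lambda>a b. f (sc c a) b)"
    using f unfolding bilin_def by (auto simp: V.scale_right_distrib mult.left_commute)
  have "(\<Sum>(a,b)\<leftarrow>D (sc c w). f a b) = (\<Sum>(a,b)\<leftarrow>map (\<lambda>(a,b). (sc c a, b)) (D w). f a b)"
    using D_scale f unfolding teq_def by blast
  also have "\<dots> = (\<Sum>(a,b)\<leftarrow>D w. f (sc c a) b)" by (simp add: case_prod_unfold o_def)
  also have "\<dots> = (\<Sum>(a,b)\<leftarrow>L. f (sc c a) b)" using assms fc unfolding teq_def by blast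
  also have "\<dots> = (\<Sum>(a,b)\<leftarrow>map (\<lambda>(a,b). (sc c a, b)) L. f a b)" by (simp add: case_prod_unfold o_def)
  finally show "(\<Sum>(a,b)\<leftarrow>D (sc c w). f a b) = (\<Sum>(a,b)\<leftarrow>map (\<lambda>(a,b). (sc c a, b)) L. f a b)" .
qed

lemma D_mult_teq: assumes P: "teq sc (D p) L" and Q: "teq sc (D q) M"
  shows "teq sc (D (p * q)) [(a * c, b * d). (a,b) \<leftarrow> L, (c,d) \<leftarrow> M]"
  unfolding teq_def
proof (intro allI impI)
  fix f assume f: "bilin sc f"
  have inner: "bilin sc (\<lambda>c d. f (u*c) (v*d))" for u v
    using f unfolding bilin_def by (auto simp: distrib_left sc_mult2[symmetric])
  have outer: "bilin sc (\<lambda>u v. \<Sum>(c,d)\<leftarrow>M. f (u*c) (v*d))"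
  proof -
    have 1: "(\<Sum>(c,d)\<leftarrow>M. f ((u+u')*c) (v*d)) = (\<Sum>(c,d)\<leftarrow>M. f (u*c) (v*d)) + (\<Sum>(c,d)\<leftarrow>M. f (u'*c) (v*d))" for u u' v
      using f unfolding bilin_def by (induction M) (auto simp: distrib_right)
    have 2: "(\<Sum>(c,d)\<leftarrow>M. f (u*c) ((v+v')*d)) = (\<Sum>(c,d)\<leftarrow>M. f (u*c) (v*d)) + (\<Sum>(c,d)\<leftarrow>M. f (u*c) (v'*d))" for u v v'
      using f unfolding bilin_def by (induction M) (auto simp: distrib_right)
    have 3: "(\<Sum>(c,d)\<leftarrow>M. f (sc k u*c) (v*d)) = k * (\<Sum>(c,d)\<leftarrow>M. f (u*c) (v*d))" for k u v
      using f unfolding bilin_def by (induction M) (auto simp: sc_mult1[symmetric] distrib_left)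
    have 4: "(\<Sum>(c,d)\<leftarrow>M. f (u*c) (sc k v*d)) = k * (\<Sum>(c,d)\<leftarrow>M. f (u*c) (v*d))" for k u v
      using f unfolding bilin_def by (induction M) (auto simp: sc_mult1[symmetric] distrib_left)
    show ?thesis unfolding bilin_def using 1 2 3 4 by blast
  qed
  have "(\<Sum>(a,b)\<leftarrow>D (p*q). f a b) = (\<Sum>(a,b)\<leftarrow>[(a * c, b * d). (a,b) \<leftarrow> D p, (c,d) \<leftarrow> D q]. f a b)"
    using D_mult f unfolding teq_def by blast
  also have "\<dots> = (\<Sum>(u,v)\<leftarrow>D p. \<Sum>(c,d)\<leftarrow>D q. f (u*c) (v*d))" by (rule sum_comp)
  also have "\<dots> = (\<Sum>(u,v)\<leftarrow>D p. \<Sum>(c,d)\<leftarrow>M. f (u*c) (v*d))"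
    using Q inner unfolding teq_def by (metis (no_types, lifting) case_prod_unfold)
  also have "\<dots> = (\<Sum>(u,v)\<leftarrow>L. \<Sum>(c,d)\<leftarrow>M. f (u*c) (v*d))"
    using P outer unfolding teq_def by blast
  also have "\<dots> = (\<Sum>(a,b)\<leftarrow>[(a * c, b * d). (a,b) \<leftarrow> L, (c,d) \<leftarrow> M]. f a b)" by (rule sum_comp[symmetric])
  finally show "(\<Sum>(a,b)\<leftarrow>D (p*q). f a b) = (\<Sum>(a,b)\<leftarrow>[(a * c, b * d). (a,b) \<leftarrow> L, (c,d) \<leftarrow> M]. f a b)" .
qed

end



definition smul :: "('k::field \<Rightarrow> 'h::ab_group_add \<Rightarrow> 'h) \<Rightarrow> nat \<Rightarrow> (nat \<Rightarrow> nat \<Rightarrow> 'k) \<Rightarrow> (nat \<Rightarrow> nat \<Rightarrow> 'h) \<Rightarrow> nat \<Rightarrow> nat \<Rightarrow> 'h" where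
  "smul sc n A M i j = (\<Sum>k<n. sc (A i k) (M k j))"
definition mulr :: "('k::field \<Rightarrow> 'h::ab_group_add \<Rightarrow> 'h) \<Rightarrow> nat \<Rightarrow> (nat \<Rightarrow> nat \<Rightarrow> 'h) \<Rightarrow> (nat \<Rightarrow> nat \<Rightarrow> 'k) \<Rightarrow> nat \<Rightarrow> nat \<Rightarrow> 'h" where
  "mulr sc n M A i j = (\<Sum>k<n. sc (A k j) (M i k))"
definition smm :: "nat \<Rightarrow> (nat \<Rightarrow> nat \<Rightarrow> 'k::field) \<Rightarrow> (nat \<Rightarrow> nat \<Rightarrow> 'k) \<Rightarrow> nat \<Rightarrow> nat \<Rightarrow> 'k" where
  "smm n A B i j = (\<Sum>k<n. A i k * B k j)"
definition idm :: "nat \<Rightarrow> nat \<Rightarrow> 'k::field" where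
  "idm i j = (if i = j then 1 else 0)"

context hopf
begin

lemma conj_eq: "conj sc n P Q C i j = smul sc n P (mulr sc n C Q) i j"
  unfolding conj_def smul_def mulr_def by (simp add: V.scale_sum_right)

lemma smul_smul: "smul sc n A (smul sc n B M) i j = smul sc n (smm n A B) M i j"
proof -
  have "smul sc n A (smul sc n B M) i j = (\<Sum>k<n. \<Sum>l<n. sc (A i k * B k l) (M l j))"
    unfolding smul_def by (simp add: V.scale_sum_right)
  also have "\<dots> = (\<Sum>l<n. \<Sum>k<n. sc (A i k * B k l) (M l j))" by (rule sum.swap)
  also have "\<dots> = smul sc n (smm n A B) M i j"
    unfolding smul_def smm_def by (simp add: V.scale_sum_left)
  finally show ?thesis .
qed

lemma mulr_mulr: "mulr sc n (mulr sc n M A) B i j = mulr sc n M (smm n A B) i j"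
proof -
  have "mulr sc n (mulr sc n M A) B i j = (\<Sum>k<n. \<Sum>l<n. sc (A l k * B k j) (M i l))"
    unfolding mulr_def by (simp add: V.scale_sum_right mult.commute)
  also have "\<dots> = (\<Sum>l<n. \<Sum>k<n. sc (A l k * B k j) (M i l))" by (rule sum.swap)
  also have "\<dots> = mulr sc n M (smm n A B) i j"
    unfolding mulr_def smm_def by (simp add: V.scale_sum_left)
  finally show ?thesis .
qed

lemma smul_mulr: "smul sc n A (mulr sc n M B) i j = mulr sc n (smul sc n A M) B i j"
proof -
  have "smul sc n A (mulr sc n M B) i j = (\<Sum>k<n. \<Sum>l<n. sc (A i k * B l j) (M k l))"
    unfolding mulr_def smul_def by (simp add: V.scale_sum_right)
  also have "\<dots> = (\<Sum>l<n. \<Sum>k<n. sc (A i k * B l j) (M k l))" by (rule sum.swap)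
  also have "\<dots> = mulr sc n (smul sc n A M) B i j"
    unfolding mulr_def smul_def by (simp add: V.scale_sum_right mult.commute)
  finally show ?thesis .
qed

lemma smul_cong: "(\<And>k. k < n \<Longrightarrow> A i k = A' i k) \<Longrightarrow> (\<And>k. k < n \<Longrightarrow> M k j = M' k j) \<Longrightarrow>
   smul sc n A M i j = smul sc n A' M' i j"
  unfolding smul_def by (intro sum.cong) auto

lemma mulr_cong: "(\<And>k. k < n \<Longrightarrow> A k j = A' k j) \<Longrightarrow> (\<And>k. k < n \<Longrightarrow> M i k = M' i k) \<Longrightarrow>
   mulr sc n M A i j = mulr sc n M' A' i j"
  unfolding mulr_def by (intro sum.cong) auto

lemma smul_id: "i < n \<Longrightarrow> smul sc n idm M i j = M i j"
proof -
  assume i: "i < n"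
  have "smul sc n idm M i j = (\<Sum>k<n. if i = k then M k j else 0)"
    unfolding smul_def idm_def by (intro sum.cong) auto
  also have "\<dots> = M i j" using i by (simp add: sum.delta)
  finally show ?thesis .
qed

lemma mulr_id: "j < n \<Longrightarrow> mulr sc n M idm i j = M i j"
proof -
  assume j: "j < n"
  have "mulr sc n M idm i j = (\<Sum>k<n. if j = k then M i k else 0)"
    unfolding mulr_def idm_def by (intro sum.cong) auto
  also have "\<dots> = M i j" using j by (simp add: sum.delta)
  finally show ?thesis .
qed

lemma iso_intertwine:
  assumes inv: "mat_inv n P Q" and C': "\<forall>i<n. \<forall>j<n. C' i j = conj sc n P Q C i j"
    and ij: "i < n" "j < n"
  shows "mulr sc n C' P i j = smul sc n P C i j"
proof -
  have "mulr sc n C' P i j = mulr sc n (smul sc n P (mulr sc n C Q)) P i j"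
    using C' ij by (intro mulr_cong) (auto simp: conj_eq)
  also have "\<dots> = smul sc n P (mulr sc n (mulr sc n C Q) P) i j"
    by (rule smul_mulr[symmetric])
  also have "\<dots> = smul sc n P (mulr sc n C (smm n Q P)) i j"
    by (intro smul_cong refl) (simp add: mulr_mulr)
  also have "\<dots> = smul sc n P (mulr sc n C idm) i j"
    using inv ij unfolding mat_inv_def
    by (intro smul_cong refl mulr_cong) (auto simp: smm_def idm_def)
  also have "\<dots> = smul sc n P C i j"
    using ij by (intro smul_cong refl) (simp add: mulr_id)
  finally show ?thesis .
qed

lemma iso_intertwine2:
  assumes inv: "mat_inv n P Q" and C': "\<forall>i<n. \<forall>j<n. C' i j = conj sc n P Q C i j"
    and ij: "i < n" "j < n"
  shows "smul sc n Q C' i j = mulr sc n C Q i j"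
proof -
  have "smul sc n Q C' i j = smul sc n Q (smul sc n P (mulr sc n C Q)) i j"
    using C' ij by (intro smul_cong) (auto simp: conj_eq)
  also have "\<dots> = smul sc n (smm n Q P) (mulr sc n C Q) i j"
    by (rule smul_smul)
  also have "\<dots> = smul sc n idm (mulr sc n C Q) i j"
    using inv ij unfolding mat_inv_def
    by (intro smul_cong refl) (auto simp: smm_def idm_def)
  also have "\<dots> = mulr sc n C Q i j"
    using ij by (simp add: smul_id)
  finally show ?thesis .
qed

end

lemma smm_assoc: "smm n A (smm n B C) i j = smm n (smm n A B) C i j"
proof -
  have "smm n A (smm n B C) i j = (\<Sum>k<n. \<Sum>l<n. A i k * B k l * C l j)"
    unfolding smm_def by (simp add: sum_distrib_left mult.assoc)
  also have "\<dots> = (\<Sum>l<n. \<Sum>k<n. A i k * B k l * C l j)" by (rule sum.swap)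
  also have "\<dots> = smm n (smm n A B) C i j"
    unfolding smm_def by (simp add: sum_distrib_right)
  finally show ?thesis .
qed

lemma smm_cong: "(\<And>k. k < n \<Longrightarrow> A i k = A' i k) \<Longrightarrow> (\<And>k. k < n \<Longrightarrow> B k j = B' k j) \<Longrightarrow>
   smm n A B i j = smm n A' B' i j"
  unfolding smm_def by (intro sum.cong) auto

lemma smm_idl: "i < n \<Longrightarrow> smm n idm B i j = B i j"
proof -
  assume i: "i < n"
  have "smm n idm B i j = (\<Sum>k<n. if i = k then B k j else 0)"
    unfolding smm_def idm_def by (intro sum.cong) auto
  also have "\<dots> = B i j" using i by (simp add: sum.delta)
  finally show ?thesis .
qed

lemma smm_idr: "j < n \<Longrightarrow> smm n A idm i j = A i j"
proof -
  assume j: "j < n"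
  have "smm n A idm i j = (\<Sum>k<n. if j = k then A i k else 0)"
    unfolding smm_def idm_def by (intro sum.cong) auto
  also have "\<dots> = A i j" using j by (simp add: sum.delta)
  finally show ?thesis .
qed

lemma mat_inv_PQ: "mat_inv n P Q \<Longrightarrow> i < n \<Longrightarrow> j < n \<Longrightarrow> smm n P Q i j = idm i j"
  and mat_inv_QP: "mat_inv n P Q \<Longrightarrow> i < n \<Longrightarrow> j < n \<Longrightarrow> smm n Q P i j = idm i j"
  unfolding mat_inv_def smm_def idm_def by auto

context hopf
begin

lemma decomp_false:
  assumes dec: "decomposable sc n C"
    and endo: "\<And>T. (\<forall>i<n. \<forall>j<n. smul sc n T C i j = mulr sc n C T i j) \<Longrightarrow>
                    \<exists>t. \<forall>i<n. \<forall>j<n. T i j = t * idm i j"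
  shows False
proof -
  obtain P Q m where inv: "mat_inv n P Q" and m: "0 < m" "m < n"
    and blk: "\<forall>i<n. \<forall>j<n. (i < m \<longleftrightarrow> m \<le> j) \<longrightarrow> conj sc n P Q C i j = 0"
    using dec unfolding decomposable_def by blast
  define C' where "C' = conj sc n P Q C"
  define J :: "nat \<Rightarrow> nat \<Rightarrow> 'k" where "J = (\<lambda>i j. if i = j \<and> i < m then 1 else 0)"
  define E where "E = smm n Q (smm n J P)"
  have C'eq: "\<forall>i<n. \<forall>j<n. C' i j = conj sc n P Q C i j" by (simp add: C'_def)
  have I1: "mulr sc n C' P i j = smul sc n P C i j" if "i < n" "j < n" for i j
    using iso_intertwine[OF inv C'eq that] .
  have I2: "smul sc n Q C' i j = mulr sc n C Q i j" if "i < n" "j < n" for i j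
    using iso_intertwine2[OF inv C'eq that] .
  have JC: "smul sc n J C' s t = mulr sc n C' J s t" if st: "s < n" "t < n" for s t
  proof -
    have "smul sc n J C' s t = (\<Sum>k<n. if s = k then (if s < m then C' k t else 0) else 0)"
      unfolding smul_def J_def by (intro sum.cong) auto
    also have "\<dots> = (if s < m then C' s t else 0)" using st by (simp add: sum.delta)
    also have "\<dots> = (if t < m then C' s t else 0)"
      using blk st unfolding C'_def by (metis not_le)
    also have "\<dots> = (\<Sum>k<n. if t = k then (if t < m then C' s k else 0) else 0)"
      using st by (simp add: sum.delta)
    also have "\<dots> = mulr sc n C' J s t"
      unfolding mulr_def J_def by (intro sum.cong) auto
    finally show ?thesis .
  qed
  have comm: "\<forall>i<n. \<forall>j<n. smul sc n E C i j = mulr sc n C E i j"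
  proof (intro allI impI)
    fix i j assume ij: "i < n" "j < n"
    have "smul sc n E C i j = smul sc n Q (smul sc n (smm n J P) C) i j"
      unfolding E_def by (rule smul_smul[symmetric])
    also have "\<dots> = smul sc n Q (smul sc n J (smul sc n P C)) i j"
      by (rule smul_cong) (simp_all add: smul_smul)
    also have "\<dots> = smul sc n Q (smul sc n J (mulr sc n C' P)) i j"
      by (rule smul_cong[OF refl], rule smul_cong[OF refl]) (simp add: I1 ij)
    also have "\<dots> = smul sc n Q (mulr sc n (smul sc n J C') P) i j"
      by (rule smul_cong) (simp_all add: smul_mulr)
    also have "\<dots> = smul sc n Q (mulr sc n (mulr sc n C' J) P) i j"
      by (rule smul_cong, simp, rule mulr_cong) (simp_all add: JC)
    also have "\<dots> = smul sc n Q (mulr sc n C' (smm n J P)) i j"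
      by (rule smul_cong) (simp_all add: mulr_mulr)
    also have "\<dots> = mulr sc n (smul sc n Q C') (smm n J P) i j"
      by (rule smul_mulr)
    also have "\<dots> = mulr sc n (mulr sc n C Q) (smm n J P) i j"
      by (rule mulr_cong[OF refl]) (simp add: I2 ij)
    also have "\<dots> = mulr sc n C E i j"
      unfolding E_def by (rule mulr_mulr)
    finally show "smul sc n E C i j = mulr sc n C E i j" .
  qed
  from endo[OF comm] obtain t where Et: "\<forall>i<n. \<forall>j<n. E i j = t * idm i j" by blast
  have key: "J i j = t * idm i j" if ij: "i < n" "j < n" for i j
  proof -
    have "smm n P (smm n E Q) i j = smm n P (\<lambda>k l. t * Q k l) i j"
    proof (rule smm_cong[OF refl])
      fix k assume k: "k < n"
      have "smm n E Q k j = (\<Sum>l<n. if k = l then t * Q l j else 0)"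
        unfolding smm_def using Et k by (intro sum.cong) (auto simp: idm_def)
      then show "smm n E Q k j = t * Q k j" using k by (simp add: sum.delta)
    qed
    also have "\<dots> = t * smm n P Q i j"
      unfolding smm_def by (simp add: sum_distrib_left mult_ac)
    also have "\<dots> = t * idm i j" using mat_inv_PQ[OF inv ij] by simp
    finally have 1: "smm n P (smm n E Q) i j = t * idm i j" .
    have "smm n P (smm n E Q) i j = smm n P (smm n Q (smm n (smm n J P) Q)) i j"
      unfolding E_def by (rule smm_cong[OF refl]) (simp add: smm_assoc)
    also have "\<dots> = smm n (smm n P Q) (smm n (smm n J P) Q) i j" by (rule smm_assoc)
    also have "\<dots> = smm n idm (smm n (smm n J P) Q) i j"
      by (rule smm_cong[OF _ refl]) (simp add: mat_inv_PQ[OF inv] ij)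
    also have "\<dots> = smm n (smm n J P) Q i j" using ij by (simp add: smm_idl)
    also have "\<dots> = smm n J (smm n P Q) i j" by (rule smm_assoc[symmetric])
    also have "\<dots> = smm n J idm i j"
      by (rule smm_cong[OF refl]) (simp add: mat_inv_PQ[OF inv] ij)
    also have "\<dots> = J i j" using ij by (simp add: smm_idr)
    finally show ?thesis using 1 by simp
  qed
  have "J 0 0 = t" using key[of 0 0] m by (simp add: idm_def)
  moreover have "J (n - 1) (n - 1) = t" using key[of "n-1" "n-1"] m by (simp add: idm_def)
  moreover have "\<not> (n - 1 < m)" using m by linarith
  ultimately show False using m unfolding J_def by auto
qed

end



lemma sum4: "(\<Sum>k<(4::nat). f k) = f 0 + f 1 + f 2 + f 3"
  by (simp add: eval_nat_numeral add.assoc)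

lemma upt4: "[0..<4] = [0,1,2,3::nat]" by (simp add: eval_nat_numeral)

lemma bilin_simps:
  assumes "bilin sc f" "vector_space sc"
  shows "f (sc c u) v = c * f u v" "f u (sc c v) = c * f u v" "f 0 v = 0" "f u 0 = 0"
  using assms(1) bilin_zero[OF assms] unfolding bilin_def by auto

lemma idx4: "(i::nat) < 4 \<Longrightarrow> i = 0 \<or> i = 1 \<or> i = 2 \<or> i = 3" by auto

locale cfg = hopf sc D e S for sc :: "'k::field \<Rightarrow> 'h::ring_1 \<Rightarrow> 'h" and D e S +
  fixes a b x y :: 'h
  assumes ga: "grouplike sc D a" and gb: "grouplike sc D b" and anb: "a \<noteq> b"
    and nx: "nontrivial_skew_prim sc D 1 a x" and ny: "nontrivial_skew_prim sc D 1 b y"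
    and nc: "a * b \<noteq> b * a"
begin

definition Cm :: "'k \<Rightarrow> nat \<Rightarrow> nat \<Rightarrow> 'h" where
  "Cm l i j = [[a, 0, a*y, sc l (y*a)], [0, b, x*b, b*x], [0, 0, a*b, 0], [0, 0, 0, b*a]] ! i ! j"

lemma Cm_simps:
  "Cm l 0 0 = a" "Cm l 0 1 = 0" "Cm l 0 2 = a*y" "Cm l 0 3 = sc l (y*a)"
  "Cm l 1 0 = 0" "Cm l 1 1 = b" "Cm l 1 2 = x*b" "Cm l 1 3 = b*x"
  "Cm l 2 0 = 0" "Cm l 2 1 = 0" "Cm l 2 2 = a*b" "Cm l 2 3 = 0"
  "Cm l 3 0 = 0" "Cm l 3 1 = 0" "Cm l 3 2 = 0" "Cm l 3 3 = b*a"
  by (simp_all add: Cm_def)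

lemma Cm_simps':
  "Cm l 0 (Suc 0) = 0" "Cm l (Suc 0) 0 = 0" "Cm l (Suc 0) (Suc 0) = b" "Cm l (Suc 0) 2 = x*b" "Cm l (Suc 0) 3 = b*x"
  "Cm l 2 (Suc 0) = 0" "Cm l 3 (Suc 0) = 0"
  by (simp_all add: Cm_def)

lemma a_inv: "S a * a = 1" "a * S a = 1" using gl_inv[OF ga] by auto
lemma b_inv: "S b * b = 1" "b * S b = 1" using gl_inv[OF gb] by auto
lemma ea: "e a = 1" using gl_e[OF ga] .
lemma eb: "e b = 1" using gl_e[OF gb] .
lemma Dx: "teq sc (D x) [(1,x),(x,a)]" using nx unfolding nontrivial_skew_prim_def skew_prim_def by auto
lemma Dy: "teq sc (D y) [(1,y),(y,b)]" using ny unfolding nontrivial_skew_prim_def skew_prim_def by auto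
lemma Da: "teq sc (D a) [(a,a)]" using ga unfolding grouplike_def by auto
lemma Db: "teq sc (D b) [(b,b)]" using gb unfolding grouplike_def by auto
lemma ex: "e x = 0" using skew_e ga nx unfolding nontrivial_skew_prim_def by blast
lemma ey: "e y = 0" using skew_e gb ny unfolding nontrivial_skew_prim_def by blast
lemma xnt: "x \<noteq> sc c (1 - a)" using nx unfolding nontrivial_skew_prim_def by auto
lemma ynt: "y \<noteq> sc c (1 - b)" using ny unfolding nontrivial_skew_prim_def by auto

lemma a1: "a \<noteq> 1" using nc by auto
lemma b1: "b \<noteq> 1" using nc by auto
lemma a0: "a \<noteq> 0" using ga unfolding grouplike_def by auto
lemma b0: "b \<noteq> 0" using gb unfolding grouplike_def by auto

lemma lcancel_a: "a * u = a * v \<Longrightarrow> u = v"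
  by (metis a_inv(1) mult.assoc mult_1_left)
lemma rcancel_a: "u * a = v * a \<Longrightarrow> u = v"
  by (metis a_inv(2) mult.assoc mult_1_right)
lemma lcancel_b: "b * u = b * v \<Longrightarrow> u = v"
  by (metis b_inv(1) mult.assoc mult_1_left)
lemma rcancel_b: "u * b = v * b \<Longrightarrow> u = v"
  by (metis b_inv(2) mult.assoc mult_1_right)

lemma dist: "a \<noteq> a*b" "a \<noteq> b*a" "b \<noteq> a*b" "b \<noteq> b*a" "a*b \<noteq> b*a" "a \<noteq> b"
proof -
  show "a \<noteq> a*b" using lcancel_a[of 1 b] b1 by auto
  show "a \<noteq> b*a" using rcancel_a[of 1 b] b1 by auto
  show "b \<noteq> a*b" using rcancel_b[of 1 a] a1 by auto
  show "b \<noteq> b*a" using lcancel_b[of 1 a] a1 by auto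
qed (use nc anb in auto)

lemma nt1: "a*y \<noteq> sc c (a - a*b)"
proof
  assume "a*y = sc c (a - a*b)"
  then have "a*y = a * sc c (1 - b)" by (simp add: sc_mult2[symmetric] right_diff_distrib)
  then show False using lcancel_a ynt by blast
qed
lemma nt2: "y*a \<noteq> sc c (a - b*a)"
proof
  assume "y*a = sc c (a - b*a)"
  then have "y*a = sc c (1 - b) * a" by (simp add: sc_mult1[symmetric] left_diff_distrib)
  then show False using rcancel_a ynt by blast
qed
lemma nt3: "x*b \<noteq> sc c (b - a*b)"
proof
  assume "x*b = sc c (b - a*b)"
  then have "x*b = sc c (1 - a) * b" by (simp add: sc_mult1[symmetric] left_diff_distrib)
  then show False using rcancel_b xnt by blast
qed
lemma nt4: "b*x \<noteq> sc c (b - b*a)"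
proof
  assume "b*x = sc c (b - b*a)"
  then have "b*x = b * sc c (1 - a)" by (simp add: sc_mult2[symmetric] right_diff_distrib)
  then show False using lcancel_b xnt by blast
qed

lemma zero_teq: assumes "\<forall>p\<in>set M. fst p = 0 \<or> snd p = 0" shows "teq sc (D 0) M"
proof -
  have "teq sc [] M" unfolding teq_def
  proof (intro allI impI)
    fix f assume f: "bilin sc f"
    have "(\<Sum>(u,v)\<leftarrow>M. f u v) = 0" using assms
      by (induction M) (auto simp: bilin_simps[OF f VS])
    then show "(\<Sum>(u,v)\<leftarrow>[]. f u v) = (\<Sum>(u,v)\<leftarrow>M. f u v)" by simp
  qed
  with D_zero show ?thesis by (rule teq_trans)
qed

lemma teq_via: assumes "teq sc (D z) L" and "\<And>f. bilin sc f \<Longrightarrow> (\<Sum>(u,v)\<leftarrow>L. f u v) = (\<Sum>(u,v)\<leftarrow>M. f u v)"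
  shows "teq sc (D z) M"
  using assms(1) by (rule teq_trans) (use assms(2) in \<open>simp add: teq_def\<close>)

lemma Dab: "teq sc (D (a*b)) [(a*b,a*b)]" using D_mult_teq[OF Da Db] by simp
lemma Dba: "teq sc (D (b*a)) [(b*a,b*a)]" using D_mult_teq[OF Db Da] by simp
lemma Day: "teq sc (D (a*y)) [(a,a*y),(a*y,a*b)]" using D_mult_teq[OF Da Dy] by simp
lemma Dya: "teq sc (D (sc l (y*a))) [(sc l a,y*a),(sc l (y*a),b*a)]"
  using D_scale_teq[OF D_mult_teq[OF Dy Da], of l] by simp
lemma Dxb: "teq sc (D (x*b)) [(b,x*b),(x*b,a*b)]" using D_mult_teq[OF Dx Db] by simp
lemma Dbx: "teq sc (D (b*x)) [(b,b*x),(b*x,b*a)]" using D_mult_teq[OF Db Dx] by simp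

lemma comod: "is_comod sc D e 4 (Cm l)"
  unfolding is_comod_def
proof (intro allI impI conjI)
  fix i j :: nat assume i: "i < 4" and j: "j < 4"
  have eab: "e (a*b) = 1" "e (b*a) = 1" by (simp_all add: e_mult ea eb)
  show "e (Cm l i j) = (if i = j then 1 else 0)"
    using idx4[OF i] idx4[OF j]
    by (elim disjE) (simp_all add: Cm_simps Cm_simps' ea eb eab e_zero e_mult e_scale ex ey)
  show "teq sc (D (Cm l i j)) (map (\<lambda>k. (Cm l i k, Cm l k j)) [0..<4])"
    using idx4[OF i] idx4[OF j]
    apply (elim disjE)
    apply (simp_all add: Cm_simps Cm_simps' upt4 zero_teq)
    apply (rule teq_via[OF Da], simp add: bilin_simps[OF _ VS])
    apply (rule teq_via[OF Day], simp add: bilin_simps[OF _ VS])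
    apply (rule teq_via[OF Dya], simp add: bilin_simps[OF _ VS])
    apply (rule teq_via[OF Db], simp add: bilin_simps[OF _ VS])
    apply (rule teq_via[OF Dxb], simp add: bilin_simps[OF _ VS])
    apply (rule teq_via[OF Dbx], simp add: bilin_simps[OF _ VS])
    apply (rule teq_via[OF Dab], simp add: bilin_simps[OF _ VS])
    apply (rule teq_via[OF Dba], simp add: bilin_simps[OF _ VS])
    done
qed

lemma L1: "g \<noteq> g' \<Longrightarrow> sc c g = sc c g' \<Longrightarrow> c = 0"
  by (metis V.scale_cancel_left)

lemma L2: assumes nt: "\<And>c. z \<noteq> sc c (g - g')" and gg: "g \<noteq> g'"
  and eq: "sc p z + sc q g' = sc q g + sc r z"
  shows "q = 0 \<and> p = r"
proof -
  have 1: "sc (p - r) z = sc q (g - g')"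
    using eq by (simp add: V.scale_left_diff_distrib V.scale_right_diff_distrib algebra_simps)
  have pr: "p = r"
  proof (rule ccontr)
    assume "p \<noteq> r"
    then have "z = sc (q / (p - r)) (g - g')"
      using 1 by (metis V.scale_scale V.scale_one divide_inverse_commute eq_iff_diff_eq_0 left_inverse)
    with nt show False by blast
  qed
  with 1 gg show ?thesis by simp
qed

lemma intertw:
  assumes E: "\<And>i j. i < 4 \<Longrightarrow> j < 4 \<Longrightarrow> smul sc 4 T (Cm l) i j = mulr sc 4 (Cm m) T i j"
  shows "\<forall>i<4. \<forall>j<4. T i j = T 0 0 * idm i j" "T 0 0 * l = T 3 3 * m"
proof -
  note simps = smul_def mulr_def sum4 Cm_simps Cm_simps'
  have E': "smul sc 4 T (Cm l) i j = mulr sc 4 (Cm m) T i j" if "i < 4" "j < 4" for i j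
    using E that by blast
  have t20: "T 2 0 = 0" using E'[of 2 0] dist by (simp add: simps)
  have t30: "T 3 0 = 0" using E'[of 3 0] dist by (simp add: simps)
  have t21: "T 2 1 = 0" using E'[of 2 1] dist by (simp add: simps)
  have t31: "T 3 1 = 0" using E'[of 3 1] dist by (simp add: simps)
  have t32: "T 3 2 = 0" using E'[of 3 2] dist t30 t31 by (simp add: simps)
  have t23: "T 2 3 = 0" using E'[of 2 3] dist t20 t21 by (simp add: simps)
  have t10: "T 1 0 = 0" using E'[of 1 0] dist t20 t30 by (simp add: simps)
  have t01: "T 0 1 = 0" using E'[of 0 1] dist t21 t31 by (simp add: simps)
  have "sc (T 0 0) (a*y) + sc (T 0 2) (a*b) = sc (T 0 2) a + sc (T 2 2) (a*y)"
    using E'[of 0 2] t01 t32 by (simp add: simps)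
  from L2[OF nt1 dist(1) this] have t02: "T 0 2 = 0" and d02: "T 0 0 = T 2 2" by auto
  have "sc (T 0 0 * l) (y*a) + sc (T 0 3) (b*a) = sc (T 0 3) a + sc (T 3 3 * m) (y*a)"
    using E'[of 0 3] t01 t23 by (simp add: simps)
  from L2[OF nt2 dist(2) this] have t03: "T 0 3 = 0" and d03: "T 0 0 * l = T 3 3 * m" by auto
  have "sc (T 1 1) (x*b) + sc (T 1 2) (a*b) = sc (T 1 2) b + sc (T 2 2) (x*b)"
    using E'[of 1 2] t10 t32 by (simp add: simps)
  from L2[OF nt3 dist(3) this] have t12: "T 1 2 = 0" and d12: "T 1 1 = T 2 2" by auto
  have "sc (T 1 1) (b*x) + sc (T 1 3) (b*a) = sc (T 1 3) b + sc (T 3 3) (b*x)"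
    using E'[of 1 3] t10 t23 by (simp add: simps)
  from L2[OF nt4 dist(4) this] have t13: "T 1 3 = 0" and d13: "T 1 1 = T 3 3" by auto
  show "\<forall>i<4. \<forall>j<4. T i j = T 0 0 * idm i j"
  proof (intro allI impI)
    fix i j :: nat assume i: "i < 4" and j: "j < 4"
    show "T i j = T 0 0 * idm i j"
      using idx4[OF i] idx4[OF j] t20 t30 t21 t31 t32 t23 t10 t01 t02 t03 t12 t13 d02 d12 d13
      by (elim disjE) (simp_all add: idm_def)
  qed
  show "T 0 0 * l = T 3 3 * m" by (rule d03)
qed

lemma indec: "indecomposable sc 4 (Cm l)"
  unfolding indecomposable_def
proof
  show "\<not> decomposable sc 4 (Cm l)"
  proof
    assume "decomposable sc 4 (Cm l)"
    then show False
    proof (rule decomp_false)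
      fix T assume "\<forall>i<4. \<forall>j<4. smul sc 4 T (Cm l) i j = mulr sc 4 (Cm l) T i j"
      then have "\<forall>i<4. \<forall>j<4. T i j = T 0 0 * idm i j" by (intro intertw(1)) auto
      then show "\<exists>t. \<forall>i<4. \<forall>j<4. T i j = t * idm i j" by blast
    qed
  qed
qed simp

lemma inv_id: "mat_inv n idm idm"
  unfolding mat_inv_def
proof (intro allI impI conjI)
  fix i j assume "i < n" "j < n"
  then show "(\<Sum>k<n. idm i k * idm k j) = (if i = j then 1 else 0)"
    "(\<Sum>k<n. idm i k * idm k j) = (if i = j then 1 else 0)"
    using smm_idl[of i n idm j] by (simp_all add: smm_def idm_def)
qed

lemma conj_id: "i < n \<Longrightarrow> j < n \<Longrightarrow> conj sc n idm idm C i j = C i j"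
  by (simp add: conj_eq smul_id mulr_id)

lemma iso_refl: "comod_iso sc 4 (Cm l) (Cm l)"
  unfolding comod_iso_def by (rule exI[of _ idm], rule exI[of _ idm]) (simp add: inv_id conj_id)

lemma iso_eq: assumes "comod_iso sc 4 (Cm l) (Cm m)" shows "l = m"
proof -
  obtain P Q where inv: "mat_inv 4 P Q" and C: "\<forall>i<4. \<forall>j<4. Cm m i j = conj sc 4 P Q (Cm l) i j"
    using assms unfolding comod_iso_def by blast
  have "smul sc 4 P (Cm l) i j = mulr sc 4 (Cm m) P i j" if "i < 4" "j < 4" for i j
    using iso_intertwine[OF inv C that] by simp
  note PP = this
  have P: "\<forall>i<4. \<forall>j<4. P i j = P 0 0 * idm i j" by (rule intertw(1)[OF PP])
  have lm: "P 0 0 * l = P 3 3 * m" by (rule intertw(2)[OF PP])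
  have "1 = smm 4 P Q 0 0" using mat_inv_PQ[OF inv, of 0 0] by (simp add: idm_def)
  also have "\<dots> = P 0 0 * Q 0 0"
    using P[rule_format, of 0 1] P[rule_format, of 0 2] P[rule_format, of 0 3]
    by (simp add: smm_def sum4 idm_def)
  finally have "P 0 0 \<noteq> 0" by auto
  moreover have "P 3 3 = P 0 0" using P[rule_format, of 3 3] by (simp add: idm_def)
  ultimately show ?thesis using lm by simp
qed

definition dg :: "nat \<Rightarrow> 'h" where "dg k = [a, b, a*b, b*a] ! k"
definition dv :: "'h \<Rightarrow> nat" where "dv g = card {k. k < 4 \<and> dg k = g}"

lemma diag_indep: "k < 4 \<Longrightarrow> Cm l k k = dg k"
  using idx4[of k] by (auto simp: Cm_simps Cm_simps' dg_def)

lemma dimvec: "has_dimvec sc 4 (Cm l) dv"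
proof -
  have 1: "\<forall>i<4. \<forall>j<4. j < i \<longrightarrow> conj sc 4 idm idm (Cm l) i j = 0"
  proof (intro allI impI)
    fix i j :: nat assume ij: "i < 4" "j < 4" "j < i"
    then have "conj sc 4 idm idm (Cm l) i j = Cm l i j" by (simp add: conj_id)
    also have "\<dots> = 0" using idx4[OF ij(1)] idx4[OF ij(2)] ij(3)
      by (elim disjE) (simp_all add: Cm_simps Cm_simps')
    finally show "conj sc 4 idm idm (Cm l) i j = 0" .
  qed
  have 2: "\<forall>g. dv g = card {k. k < 4 \<and> conj sc 4 idm idm (Cm l) k k = g}"
  proof
    fix g
    have "{k. k < 4 \<and> conj sc 4 idm idm (Cm l) k k = g} = {k. k < 4 \<and> dg k = g}"
      by (auto simp: conj_id diag_indep)
    then show "dv g = card {k. k < 4 \<and> conj sc 4 idm idm (Cm l) k k = g}"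
      unfolding dv_def by simp
  qed
  show ?thesis unfolding has_dimvec_def using inv_id 1 2 by blast
qed

lemma gl_ab: "grouplike sc D (a*b)"
  unfolding grouplike_def using Dab lcancel_a[of b 0] b0 by auto
lemma gl_ba: "grouplike sc D (b*a)"
  unfolding grouplike_def using Dba lcancel_b[of a 0] a0 by auto

lemma dv_supp: "{g. dv g \<noteq> 0} \<subseteq> {a, b, a*b, b*a}"
proof
  fix g assume "g \<in> {g. dv g \<noteq> 0}"
  then have "card {k. k < 4 \<and> dg k = g} \<noteq> 0" unfolding dv_def by simp
  then have "{k. k < 4 \<and> dg k = g} \<noteq> {}" by (intro notI) simp
  then obtain k where "k < 4" "dg k = g" by auto
  then show "g \<in> {a, b, a*b, b*a}" using idx4[of k] by (auto simp: dg_def)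
qed

end

lemma alg_closed_infinite: "infinite (UNIV :: 'k::alg_closed_field set)"
proof
  assume fin: "finite (UNIV :: 'k set)"
  define q :: "'k poly" where "q = (\<Prod>c\<in>UNIV. [:-c, 1:])"
  have "degree q = (\<Sum>c\<in>(UNIV::'k set). degree [:-c, 1:])"
    unfolding q_def by (rule degree_prod_eq_sum_degree) auto
  also have "\<dots> = card (UNIV :: 'k set)" by simp
  finally have dq: "degree q = card (UNIV :: 'k set)" .
  have "card (UNIV :: 'k set) > 0" using fin by (simp add: card_gt_0_iff)
  then have dq0: "degree q > 0" using dq by simp
  then have "degree (q + 1) = degree q" by (intro degree_add_eq_left) simp
  with dq0 obtain z where "poly (q + 1) z = 0" using alg_closed_imp_poly_has_root by metis
  moreover have "poly q z = 0"
    unfolding q_def poly_prod using fin by (subst prod_zero_iff) auto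
  ultimately show False by simp
qed


theorem lemma4p4:
  fixes sc :: "'k::alg_closed_field \<Rightarrow> 'h::ring_1 \<Rightarrow> 'h"
    and D :: "'h \<Rightarrow> ('h \<times> 'h) list" and e :: "'h \<Rightarrow> 'k" and S :: "'h \<Rightarrow> 'h"
    and a b x y :: 'h
  assumes "hopf_algebra sc D e S"
    and "pointed sc D e"
    and "discrete_corep_type sc D e"
    and "grouplike sc D a" and "grouplike sc D b" and "a \<noteq> b"
    and "nontrivial_skew_prim sc D 1 a x"
    and "nontrivial_skew_prim sc D 1 b y"
  shows "a * b = b * a"
proof (rule ccontr)
  assume nc: "a * b \<noteq> b * a"
  interpret cfg sc D e S a b x y
    by (unfold_locales) (use assms nc in auto)
  define cls where "cls = (\<lambda>(n, C). {(m, C'). m = n \<and> is_comod sc D e m C' \<and> comod_iso sc m C C'})"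
  define Dom where "Dom = {(n, C). is_comod sc D e n C \<and> indecomposable sc n C \<and> has_dimvec sc n C dv}"
  have fs: "finite {g. dv g \<noteq> 0}" using dv_supp by (rule finite_subset) simp
  have gs: "\<forall>g. dv g \<noteq> 0 \<longrightarrow> grouplike sc D g"
    using dv_supp ga gb gl_ab gl_ba by auto
  have fin: "finite (cls ` Dom)"
    using assms(3) fs gs unfolding discrete_corep_type_def cls_def Dom_def by blast
  define F where "F = (\<lambda>l. cls (4, Cm l))"
  have sub: "range F \<subseteq> cls ` Dom"
    unfolding F_def Dom_def using comod indec dimvec by auto
  have inj: "inj F"
  proof (rule injI)
    fix l m assume "F l = F m"
    moreover have "(4, Cm m) \<in> F m" unfolding F_def cls_def using comod iso_refl by auto
    ultimately have "(4, Cm m) \<in> F l" by simp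
    then have "comod_iso sc 4 (Cm l) (Cm m)" unfolding F_def cls_def by auto
    then show "l = m" by (rule iso_eq)
  qed
  have "infinite (range F)"
    using inj alg_closed_infinite finite_imageD by blast
  with sub fin show False using finite_subset by blast
qed

end
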